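(* Let $L\ge2$, $\theta\in\mathbb R$, and $w_1,\dots,w_L\in\mathbb R\setminus\{0\}$, and consider on $\mathcal F(\mathbb C^L)$ $$\mathbf H_L=\sum_{j=1}^{L-1}w_j\,i{\mathfrak b}_{2j}{\mathfrak b}_{2j+1}+w_L\,i{\mathfrak b}_{2L}{\mathfrak b}_1 .$$ Let $s_{w_j}\in\{0,1\}$ be such that $(-1)^{s_{w_j}}w_j>0$, let $s_P=\sum_{j=1}^Ls_{w_j}$, and set ${\mathfrak d}_j=\frac12({\mathfrak b}_{2j}+(-1)^{s_{w_j}}i{\mathfrak b}_{2j+1})$ for $1\le j\le L-1$ and ${\mathfrak d}_{\mathrm{bd}}=\frac12({\mathfrak b}_{2L}+(-1)^{s_{w_L}}i{\mathfrak b}_1)$. (i) If $L$ and $s_P$ have the same parity, then ${\mathfrak d}_1\cdots{\mathfrak d}_{L-1}|\Omega\rangle$ is a ground state of $\mathbf H_L$. (ii) If $L$ and $s_P$ have different parity, then ${\mathfrak d}_{\mathrm{bd}}{\mathfrak d}_1\cdots{\mathfrak d}_{L-1}|\Omega\rangle$ is a ground state of $\mathbf H_L$.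
   Context: $\mathcal F(\mathbb C^L)$ is the fermionic Fock space with CAR operators ${\mathfrak a}_j$, $j=1,\dots,L$, and vacuum $|\Omega\rangle$. Majorana operators: ${\mathfrak b}_{2j-1}=e^{i\theta/2}{\mathfrak a}_j+e^{-i\theta/2}{\mathfrak a}_j^*$, ${\mathfrak b}_{2j}=-ie^{i\theta/2}{\mathfrak a}_j+ie^{-i\theta/2}{\mathfrak a}_j^*$. In terms of the ${\mathfrak a}_j$, $\mathbf H_L=\sum_{j=1}^{L-1}w_j[-({\mathfrak a}_j^*{\mathfrak a}_{j+1}+{\mathfrak a}_{j+1}^*{\mathfrak a}_j)+e^{i\theta}{\mathfrak a}_j{\mathfrak a}_{j+1}+e^{-i\theta}{\mathfrak a}_{j+1}^*{\mathfrak a}_j^*]+w_L[-({\mathfrak a}_L^*{\mathfrak a}_1+{\mathfrak a}_1^*{\mathfrak a}_L)+e^{i\theta}{\mathfrak a}_L{\mathfrak a}_1+e^{-i\theta}{\mathfrak a}_1^*{\mathfrak a}_L^*]$. A ground state is a non-zero eigenvector for the lowest eigenvalue. *)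

theory Defs
  imports Complex_Main
begin

text \<open>Fermionic Fock space F(C^L): a vector is a coefficient function on occupation
  sets S, i.e. psi S is the coefficient of the basis vector
  a*_{s1} ... a*_{sk} |Omega>, s1 < ... < sk, S = {s1,...,sk}.\<close>

type_synonym fstate = "nat set \<Rightarrow> complex"
type_synonym fop = "fstate \<Rightarrow> fstate"

definition fock :: "nat \<Rightarrow> fstate set" where
  "fock L = {psi. \<forall>S. \<not> S \<subseteq> {1..L} \<longrightarrow> psi S = 0}"

definition vac :: fstate where
  "vac = (\<lambda>S. if S = {} then 1 else 0)"

definition jw_sign :: "nat set \<Rightarrow> nat \<Rightarrow> complex" where
  "jw_sign S j = (-1) ^ card {k \<in> S. k < j}"

definition ann :: "nat \<Rightarrow> fop" where
  "ann j psi = (\<lambda>S. if j \<notin> S then jw_sign S j * psi (insert j S) else 0)"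

definition cre :: "nat \<Rightarrow> fop" where
  "cre j psi = (\<lambda>S. if j \<in> S then jw_sign S j * psi (S - {j}) else 0)"

definition maj :: "real \<Rightarrow> nat \<Rightarrow> fop" where
  "maj \<theta> n psi =
     (if odd n then
        (\<lambda>S. exp (\<i> * of_real (\<theta>/2)) * ann ((n + 1) div 2) psi S
            + exp (- \<i> * of_real (\<theta>/2)) * cre ((n + 1) div 2) psi S)
      else
        (\<lambda>S. - \<i> * exp (\<i> * of_real (\<theta>/2)) * ann (n div 2) psi S
            + \<i> * exp (- \<i> * of_real (\<theta>/2)) * cre (n div 2) psi S))"

definition ham :: "nat \<Rightarrow> real \<Rightarrow> (nat \<Rightarrow> real) \<Rightarrow> fop" where
  "ham L \<theta> w psi =
     (\<lambda>S. (\<Sum>j=1..L-1. of_real (w j) * \<i> * maj \<theta> (2*j) (maj \<theta> (2*j+1) psi) S)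
          + of_real (w L) * \<i> * maj \<theta> (2*L) (maj \<theta> 1 psi) S)"

definition sgnbit :: "real \<Rightarrow> nat" where
  "sgnbit x = (if x > 0 then 0 else 1)"

definition sP :: "nat \<Rightarrow> (nat \<Rightarrow> real) \<Rightarrow> nat" where
  "sP L w = (\<Sum>j=1..L. sgnbit (w j))"

definition dop :: "real \<Rightarrow> (nat \<Rightarrow> real) \<Rightarrow> nat \<Rightarrow> fop" where
  "dop \<theta> w j psi = (\<lambda>S. (1/2) * (maj \<theta> (2*j) psi S
                         + (-1) ^ sgnbit (w j) * \<i> * maj \<theta> (2*j+1) psi S))"

definition dbd :: "nat \<Rightarrow> real \<Rightarrow> (nat \<Rightarrow> real) \<Rightarrow> fop" where
  "dbd L \<theta> w psi = (\<lambda>S. (1/2) * (maj \<theta> (2*L) psi S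
                         + (-1) ^ sgnbit (w L) * \<i> * maj \<theta> 1 psi S))"

fun dprod :: "real \<Rightarrow> (nat \<Rightarrow> real) \<Rightarrow> nat \<Rightarrow> fop" where
  "dprod \<theta> w 0 psi = psi"
| "dprod \<theta> w (Suc k) psi = dprod \<theta> w k (dop \<theta> w (Suc k) psi)"

definition ground_state :: "nat \<Rightarrow> fop \<Rightarrow> fstate \<Rightarrow> bool" where
  "ground_state L H psi \<longleftrightarrow> psi \<in> fock L \<and> psi \<noteq> (\<lambda>_. 0) \<and>
     (\<exists>E::real. H psi = (\<lambda>S. of_real E * psi S) \<and>
        (\<forall>phi \<in> fock L. \<forall>\<mu>::complex. phi \<noteq> (\<lambda>_. 0) \<and> H phi = (\<lambda>S. \<mu> * phi S)
              \<longrightarrow> E \<le> Re \<mu>))"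

end

theory Submission
  imports Defs
begin

definition tog :: "nat \<Rightarrow> nat set \<Rightarrow> nat set" where
  "tog j S = (if j \<in> S then S - {j} else insert j S)"

definition gop :: "nat \<Rightarrow> complex \<Rightarrow> complex \<Rightarrow> fop" where
  "gop j a b psi = (\<lambda>S. jw_sign S j * (if j \<in> S then a * psi (S - {j}) else b * psi (insert j S)))"

lemma fin_less: "finite {k \<in> S. k < (j::nat)}"
  by (rule finite_subset[of _ "{..<j}"]) auto

lemma jw_remove_self[simp]: "jw_sign (S - {j}) j = jw_sign S j"
  unfolding jw_sign_def by (rule arg_cong[where f="\<lambda>n. (-1)^n"]) (rule arg_cong[where f=card], auto)

lemma jw_insert_self[simp]: "jw_sign (insert j S) j = jw_sign S j"
  unfolding jw_sign_def by (rule arg_cong[where f="\<lambda>n. (-1)^n"]) (rule arg_cong[where f=card], auto)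

lemma jw_sq[simp]: "jw_sign S j * jw_sign S j = 1"
  unfolding jw_sign_def by (simp add: power_mult_distrib[symmetric])

lemma jw_insert: "k \<noteq> j \<Longrightarrow> jw_sign (insert k S) j = (if k < j \<and> k \<notin> S then -1 else 1) * jw_sign S j"
proof -
  assume "k \<noteq> j"
  show ?thesis
  proof (cases "k < j \<and> k \<notin> S")
    case True
    have "{x \<in> insert k S. x < j} = insert k {x \<in> S. x < j}" using True by auto
    moreover have "k \<notin> {x \<in> S. x < j}" using True by auto
    ultimately show ?thesis using True fin_less[of S j] unfolding jw_sign_def by simp
  next
    case False
    have "{x \<in> insert k S. x < j} = {x \<in> S. x < j}" using False by auto
    then show ?thesis using False unfolding jw_sign_def by simp
  qed
qed

lemma jw_remove: "k \<noteq> j \<Longrightarrow> jw_sign (S - {k}) j = (if k < j \<and> k \<in> S then -1 else 1) * jw_sign S j"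
proof -
  assume kj: "k \<noteq> j"
  show ?thesis
  proof (cases "k \<in> S")
    case True
    then have "S = insert k (S - {k})" by auto
    then have "jw_sign S j = jw_sign (insert k (S - {k})) j" by simp
    also have "\<dots> = (if k < j then -1 else 1) * jw_sign (S - {k}) j" by (subst jw_insert[OF kj]) simp
    finally show ?thesis using True by auto
  next
    case False then show ?thesis by simp
  qed
qed

lemma gop_gop_same: "gop j a b (gop j c d psi) = (\<lambda>S. (if j \<in> S then a * d else b * c) * psi S)"
  unfolding gop_def by (rule ext) (auto simp: insert_absorb)

lemma gop_anti: assumes "j \<noteq> k"
  shows "gop j a b (gop k c d psi) S = - gop k c d (gop j a b psi) S"
proof -
  have kj: "k \<noteq> j" using assms by simp
  have c1: "S - {j} - {k} = S - {k} - {j}" "insert j (S - {k}) = insert j S - {k}"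
     "insert k (S - {j}) = insert k S - {j}" "insert j (insert k S) = insert k (insert j S)" using assms by auto
  show ?thesis
    unfolding gop_def using assms
    by (cases "j < k") (auto simp: jw_insert[OF assms] jw_insert[OF kj] jw_remove[OF assms] jw_remove[OF kj] c1 algebra_simps)
qed

lemma gop_add: "gop j a b (\<lambda>S. f S + g S) = (\<lambda>S. gop j a b f S + gop j a b g S)"
  unfolding gop_def by (rule ext) (simp add: algebra_simps)

lemma gop_scale: "gop j a b (\<lambda>S. c * f S) = (\<lambda>S. c * gop j a b f S)"
  unfolding gop_def by (rule ext) (simp add: algebra_simps)

definition alp :: "real \<Rightarrow> nat \<Rightarrow> complex" where
  "alp \<theta> n = (if odd n then exp (- \<i> * of_real (\<theta>/2)) else \<i> * exp (- \<i> * of_real (\<theta>/2)))"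
definition bet :: "real \<Rightarrow> nat \<Rightarrow> complex" where
  "bet \<theta> n = (if odd n then exp (\<i> * of_real (\<theta>/2)) else - \<i> * exp (\<i> * of_real (\<theta>/2)))"

lemma maj_gop: "maj \<theta> n = gop ((n+1) div 2) (alp \<theta> n) (bet \<theta> n)"
proof (intro ext)
  fix psi S
  show "maj \<theta> n psi S = gop ((n+1) div 2) (alp \<theta> n) (bet \<theta> n) psi S"
  proof (cases "odd n")
    case True then show ?thesis unfolding maj_def gop_def alp_def bet_def ann_def cre_def
      by (auto simp: algebra_simps)
  next
    case False
    then have "n div 2 = (n+1) div 2" by presburger
    then show ?thesis using False unfolding maj_def gop_def alp_def bet_def ann_def cre_def
      by (auto simp: algebra_simps)
  qed
qed

lemma expprod: "exp (- \<i> * of_real x) * exp (\<i> * of_real x) = 1"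
  by (simp add: exp_minus field_simps)

lemma alp_bet: "alp \<theta> n * bet \<theta> n = 1"
  unfolding alp_def bet_def using expprod[of "\<theta>/2"]
  by (auto simp: algebra_simps)

lemma cmod_alp[simp]: "cmod (alp \<theta> n) = 1"
  unfolding alp_def by (auto simp: norm_mult)
lemma cmod_bet[simp]: "cmod (bet \<theta> n) = 1"
  unfolding bet_def by (auto simp: norm_mult)

lemma maj_maj_self: "maj \<theta> n (maj \<theta> n psi) = psi"
  unfolding maj_gop gop_gop_same using alp_bet[of \<theta> n]
  by (auto simp: algebra_simps)

lemma maj_anti: assumes "m \<noteq> n"
  shows "maj \<theta> m (maj \<theta> n psi) S = - maj \<theta> n (maj \<theta> m psi) S"
proof (cases "(m+1) div 2 = (n+1) div 2")
  case False
  then show ?thesis unfolding maj_gop by (rule gop_anti)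
next
  case True
  have par: "odd m \<noteq> odd n" using True assms by presburger
  have e: "exp (- \<i> * of_real (\<theta>/2)) * exp (\<i> * of_real (\<theta>/2)) = 1" by (rule expprod)
  show ?thesis unfolding maj_gop True gop_gop_same using par e
    unfolding alp_def bet_def
    by (cases "odd m") (auto simp: algebra_simps)
qed

lemma maj_add: "maj \<theta> n (\<lambda>S. f S + g S) = (\<lambda>S. maj \<theta> n f S + maj \<theta> n g S)"
  unfolding maj_gop by (rule gop_add)
lemma maj_scale: "maj \<theta> n (\<lambda>S. c * f S) = (\<lambda>S. c * maj \<theta> n f S)"
  unfolding maj_gop by (rule gop_scale)
lemma maj_neg: "maj \<theta> n (\<lambda>S. - f S) = (\<lambda>S. - maj \<theta> n f S)"
  using maj_scale[of \<theta> n "-1" f] by simp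

lemma maj_anti_fun: "m \<noteq> n \<Longrightarrow> maj \<theta> n (maj \<theta> m psi) = (\<lambda>S. - maj \<theta> m (maj \<theta> n psi) S)"
  using maj_anti[of n m \<theta> psi] by (intro ext) simp

lemma maj_triple: assumes "m \<noteq> p" "n \<noteq> p"
  shows "maj \<theta> m (maj \<theta> n (maj \<theta> p X)) = maj \<theta> p (maj \<theta> m (maj \<theta> n X))"
proof -
  have "maj \<theta> m (maj \<theta> n (maj \<theta> p X)) = maj \<theta> m (\<lambda>S. - maj \<theta> p (maj \<theta> n X) S)"
    using maj_anti_fun[of p n \<theta> X] assms by simp
  also have "\<dots> = (\<lambda>S. - maj \<theta> m (maj \<theta> p (maj \<theta> n X)) S)" by (rule maj_neg)
  also have "\<dots> = maj \<theta> p (maj \<theta> m (maj \<theta> n X))"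
    using maj_anti_fun[of p m \<theta> "maj \<theta> n X"] assms by simp
  finally show ?thesis .
qed

definition PP :: "real \<Rightarrow> nat \<Rightarrow> nat \<Rightarrow> fop" where
  "PP \<theta> m n phi = (\<lambda>S. \<i> * maj \<theta> m (maj \<theta> n phi) S)"

definition DD :: "real \<Rightarrow> complex \<Rightarrow> nat \<Rightarrow> nat \<Rightarrow> fop" where
  "DD \<theta> \<sigma> m n phi = (\<lambda>S. (1/2) * (maj \<theta> m phi S + \<sigma> * \<i> * maj \<theta> n phi S))"

lemma PD: assumes "m \<noteq> n" "\<sigma> * \<sigma> = 1"
  shows "PP \<theta> m n (DD \<theta> \<sigma> m n phi) = (\<lambda>S. - \<sigma> * DD \<theta> \<sigma> m n phi S)"
proof -
  have a: "maj \<theta> n (maj \<theta> m phi) = (\<lambda>S. - maj \<theta> m (maj \<theta> n phi) S)"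
    using maj_anti_fun assms by blast
  have s2: "\<sigma> * (\<sigma> * z) = z" for z using assms(2) by (simp add: mult.assoc[symmetric])
  show ?thesis
    apply (rule ext)
    apply (simp only: PP_def DD_def maj_scale maj_add maj_neg a maj_maj_self)
    apply (simp add: algebra_simps s2)
    done
qed

lemma PC: assumes "m \<noteq> p" "n \<noteq> p" "m \<noteq> q" "n \<noteq> q"
  shows "PP \<theta> m n (DD \<theta> \<sigma> p q phi) = DD \<theta> \<sigma> p q (PP \<theta> m n phi)"
  apply (rule ext)
  apply (simp only: PP_def DD_def maj_scale maj_add maj_triple[OF assms(1,2)] maj_triple[OF assms(3,4)])
  apply (simp add: algebra_simps)
  done

definition gsg :: "nat \<Rightarrow> nat set \<Rightarrow> complex" where
  "gsg L S = (\<Prod>j\<in>{1..L}. if j \<in> S then -1 else 1)"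

definition gam :: "nat \<Rightarrow> fop" where
  "gam L phi = (\<lambda>S. gsg L S * phi S)"

lemma gsg_tog: assumes "j \<in> {1..L}" shows "gsg L (tog j S) = - gsg L S"
proof -
  have fin: "finite {1..L}" by simp
  have eq: "(\<Prod>k\<in>{1..L}-{j}. if k \<in> tog j S then -1 else (1::complex)) = (\<Prod>k\<in>{1..L}-{j}. if k \<in> S then -1 else 1)"
    by (rule prod.cong) (auto simp: tog_def)
  show ?thesis unfolding gsg_def
    using prod.remove[OF fin assms, of "\<lambda>k. if k \<in> tog j S then -1 else (1::complex)"]
      prod.remove[OF fin assms, of "\<lambda>k. if k \<in> S then -1 else (1::complex)"] eq
    by (auto simp: tog_def)
qed

lemma gsg_remove: "j \<in> {1..L} \<Longrightarrow> j \<in> S \<Longrightarrow> gsg L (S - {j}) = - gsg L S"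
  using gsg_tog[of j L S] by (simp add: tog_def)
lemma gsg_insert: "j \<in> {1..L} \<Longrightarrow> j \<notin> S \<Longrightarrow> gsg L (insert j S) = - gsg L S"
  using gsg_tog[of j L S] by (simp add: tog_def)

lemma gam_gop: assumes "j \<in> {1..L}"
  shows "gam L (gop j a b phi) = (\<lambda>S. - gop j a b (gam L phi) S)"
  unfolding gam_def gop_def
  by (rule ext) (auto simp: gsg_remove[OF assms] gsg_insert[OF assms])

lemma gam_maj: assumes "(n+1) div 2 \<in> {1..L}"
  shows "gam L (maj \<theta> n phi) = (\<lambda>S. - maj \<theta> n (gam L phi) S)"
  unfolding maj_gop by (rule gam_gop[OF assms])

lemma gam_lin: "gam L (\<lambda>S. c * (f S + d * g S)) = (\<lambda>S. c * (gam L f S + d * gam L g S))"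
  unfolding gam_def by (rule ext) (simp add: algebra_simps)

lemma gam_DD: assumes "(m+1) div 2 \<in> {1..L}" "(n+1) div 2 \<in> {1..L}"
  shows "gam L (DD \<theta> \<sigma> m n phi) = (\<lambda>S. - DD \<theta> \<sigma> m n (gam L phi) S)"
  unfolding DD_def gam_lin gam_maj[OF assms(1)] gam_maj[OF assms(2)]
  by (rule ext) (simp add: algebra_simps)

lemma dop_DD: "dop \<theta> w j = DD \<theta> ((-1) ^ sgnbit (w j)) (2*j) (2*j+1)"
  unfolding dop_def DD_def by (intro ext) simp

lemma dbd_DD: "dbd L \<theta> w = DD \<theta> ((-1) ^ sgnbit (w L)) (2*L) 1"
  unfolding dbd_def DD_def by (intro ext) simp

fun dr :: "real \<Rightarrow> (nat \<Rightarrow> real) \<Rightarrow> nat \<Rightarrow> nat \<Rightarrow> fop" where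
  "dr \<theta> w a 0 phi = phi"
| "dr \<theta> w a (Suc n) phi = dop \<theta> w a (dr \<theta> w (Suc a) n phi)"

lemma dr_snoc: "dr \<theta> w a (Suc n) phi = dr \<theta> w a n (dop \<theta> w (a+n) phi)"
  by (induction n arbitrary: a) auto

lemma dprod_dr: "dprod \<theta> w k phi = dr \<theta> w 1 k phi"
proof (induction k arbitrary: phi)
  case 0 then show ?case by simp
next
  case (Suc k)
  have "dprod \<theta> w (Suc k) phi = dr \<theta> w 1 k (dop \<theta> w (1+k) phi)" using Suc by simp
  also have "\<dots> = dr \<theta> w 1 (Suc k) phi" by (rule dr_snoc[symmetric])
  finally show ?case .
qed

lemma gop_support: assumes "\<forall>T. \<not> T \<subseteq> A \<longrightarrow> X T = 0" "\<not> S \<subseteq> insert j A"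
  shows "gop j a b X S = 0"
proof -
  have "\<not> S - {j} \<subseteq> A" "\<not> insert j S \<subseteq> A" using assms(2) by auto
  then show ?thesis using assms(1) unfolding gop_def by auto
qed

lemma maj_support: assumes "\<forall>T. \<not> T \<subseteq> A \<longrightarrow> X T = 0" "\<not> S \<subseteq> insert ((n+1) div 2) A"
  shows "maj \<theta> n X S = 0"
  unfolding maj_gop by (rule gop_support[OF assms])

lemma sq_sigma: "((-1::complex) ^ k) * ((-1) ^ k) = 1"
  by (simp add: power_mult_distrib[symmetric])

lemma dr_support: "a \<ge> 1 \<Longrightarrow> \<forall>S. \<not> S \<subseteq> {a..a+n} \<longrightarrow> dr \<theta> w a n vac S = 0"
proof (induction n arbitrary: a)
  case 0
  then show ?case by (auto simp: vac_def)
next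
  case (Suc n)
  have IH: "\<forall>T. \<not> T \<subseteq> {Suc a..Suc a+n} \<longrightarrow> dr \<theta> w (Suc a) n vac T = 0" using Suc by simp
  show ?case
  proof (intro allI impI)
    fix S assume S: "\<not> S \<subseteq> {a..a + Suc n}"
    have e1: "(2*a+1) div 2 = a" "(2*a+1+1) div 2 = Suc a" by presburger+
    have i1: "insert a {Suc a..Suc a+n} = {a..a+Suc n}" by auto
    have i2: "insert (Suc a) {Suc a..Suc a+n} \<subseteq> {a..a+Suc n}" by auto
    have "maj \<theta> (2*a) (dr \<theta> w (Suc a) n vac) S = 0"
      by (rule maj_support[OF IH]) (use S e1 i1 in simp)
    moreover have "maj \<theta> (2*a+1) (dr \<theta> w (Suc a) n vac) S = 0"
      by (rule maj_support[OF IH]) (use S e1 i2 in auto)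
    ultimately show "dr \<theta> w a (Suc n) vac S = 0" by (simp add: dop_def)
  qed
qed

lemma jw_nz[simp]: "jw_sign S j \<noteq> 0"
  unfolding jw_sign_def by simp

lemma alp_nz[simp]: "alp \<theta> n \<noteq> 0"
  using cmod_alp[of \<theta> n] by (metis norm_zero zero_neq_one)

lemma dr_coeff: "a \<ge> 1 \<Longrightarrow> dr \<theta> w a n vac {a..<a+n} \<noteq> 0"
proof (induction n arbitrary: a)
  case 0
  then show ?case by (auto simp: vac_def)
next
  case (Suc n)
  have IH: "dr \<theta> w (Suc a) n vac {Suc a..<Suc a+n} \<noteq> 0" using Suc.IH[of "Suc a"] by simp
  have sup: "\<forall>T. \<not> T \<subseteq> {Suc a..Suc a+n} \<longrightarrow> dr \<theta> w (Suc a) n vac T = 0"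
    using dr_support[of "Suc a"] by simp
  define S where "S = {a..<a + Suc n}"
  have e1: "(2*a+1) div 2 = a" "(2*a+1+1) div 2 = Suc a" by presburger+
  have "maj \<theta> (2*a+1) (dr \<theta> w (Suc a) n vac) S = 0"
  proof (rule maj_support[OF sup])
    have "a \<in> S" "a \<notin> insert (Suc a) {Suc a..Suc a + n}" by (auto simp: S_def)
    then show "\<not> S \<subseteq> insert ((2 * a + 1 + 1) div 2) {Suc a..Suc a + n}" unfolding e1 by blast
  qed
  moreover have "maj \<theta> (2*a) (dr \<theta> w (Suc a) n vac) S
     = jw_sign S a * (alp \<theta> (2*a) * dr \<theta> w (Suc a) n vac (S - {a}))"
    unfolding maj_gop gop_def by (simp add: e1 S_def)
  moreover have "S - {a} = {Suc a..<Suc a+n}" by (auto simp: S_def)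
  ultimately have "dr \<theta> w a (Suc n) vac S \<noteq> 0" using IH by (simp add: dop_def)
  then show ?case by (simp add: S_def)
qed

lemma DD_scale: "DD \<theta> \<sigma> p q (\<lambda>S. c * f S) = (\<lambda>S. c * DD \<theta> \<sigma> p q f S)"
  unfolding DD_def maj_scale by (rule ext) (simp add: algebra_simps)

lemma DD_nscale: "DD \<theta> \<sigma> p q (\<lambda>S. - (c * f S)) = (\<lambda>S. - (c * DD \<theta> \<sigma> p q f S))"
  using DD_scale[of \<theta> \<sigma> p q "-c" f] by simp

lemma dr_parity: "a \<ge> 1 \<Longrightarrow> a + n \<le> L \<Longrightarrow> gam L (dr \<theta> w a n vac) = (\<lambda>S. (-1)^n * dr \<theta> w a n vac S)"
proof (induction n arbitrary: a)
  case 0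
  then show ?case by (auto simp: vac_def gam_def gsg_def)
next
  case (Suc n)
  have e1: "(2*a+1) div 2 = a" "(2*a+1+1) div 2 = Suc a" by presburger+
  have "gam L (dr \<theta> w a (Suc n) vac) = (\<lambda>S. - DD \<theta> ((-1) ^ sgnbit (w a)) (2*a) (2*a+1) (gam L (dr \<theta> w (Suc a) n vac)) S)"
    unfolding dr.simps dop_DD by (rule gam_DD) (use Suc.prems e1 in auto)
  also have "\<dots> = (\<lambda>S. (-1)^Suc n * dr \<theta> w a (Suc n) vac S)"
    using Suc.IH[of "Suc a"] Suc.prems by (simp add: DD_scale dop_DD)
  finally show ?case .
qed

lemma dr_eig: "a \<ge> 1 \<Longrightarrow> a \<le> j \<Longrightarrow> j < a + n \<Longrightarrow>
   PP \<theta> (2*j) (2*j+1) (dr \<theta> w a n phi) = (\<lambda>S. - ((-1) ^ sgnbit (w j)) * dr \<theta> w a n phi S)"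
proof (induction n arbitrary: a)
  case 0
  then show ?case by simp
next
  case (Suc n)
  show ?case
  proof (cases "j = a")
    case True
    show ?thesis unfolding dr.simps dop_DD True by (rule PD) (auto simp: sq_sigma)
  next
    case False
    then have "PP \<theta> (2*j) (2*j+1) (dr \<theta> w a (Suc n) phi) = DD \<theta> ((-1) ^ sgnbit (w a)) (2*a) (2*a+1) (PP \<theta> (2*j) (2*j+1) (dr \<theta> w (Suc a) n phi))"
      unfolding dr.simps dop_DD by (intro PC) auto
    also have "\<dots> = (\<lambda>S. - ((-1) ^ sgnbit (w j)) * dr \<theta> w a (Suc n) phi S)"
      using Suc.IH[of "Suc a"] Suc.prems False by (simp add: DD_nscale dop_DD)
    finally show ?thesis .
  qed
qed

fun QQ :: "real \<Rightarrow> nat \<Rightarrow> fop" where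
  "QQ \<theta> 0 phi = phi"
| "QQ \<theta> (Suc k) phi = QQ \<theta> k (maj \<theta> (2*k+2) (maj \<theta> (2*k+3) phi))"

fun RR :: "real \<Rightarrow> nat \<Rightarrow> fop" where
  "RR \<theta> 0 phi = phi"
| "RR \<theta> (Suc k) phi = RR \<theta> k (maj \<theta> (2*k+1) (maj \<theta> (2*k+2) phi))"

lemma RR_QQ: "RR \<theta> (Suc k) phi = maj \<theta> 1 (QQ \<theta> k (maj \<theta> (2*k+2) phi))"
  by (induction k arbitrary: phi) (simp_all add: numeral_eq_Suc)

lemma QQ_comm: "m > 2*k+1 \<Longrightarrow> QQ \<theta> k (maj \<theta> m phi) = maj \<theta> m (QQ \<theta> k phi)"
proof (induction k arbitrary: phi)
  case 0 then show ?case by simp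
next
  case (Suc k)
  have "QQ \<theta> (Suc k) (maj \<theta> m phi) = QQ \<theta> k (maj \<theta> m (maj \<theta> (2*k+2) (maj \<theta> (2*k+3) phi)))"
    using maj_triple[of "2*k+2" m "2*k+3" \<theta> phi] Suc.prems by simp
  also have "\<dots> = maj \<theta> m (QQ \<theta> (Suc k) phi)" using Suc by simp
  finally show ?case .
qed

lemma QQ_scale: "QQ \<theta> k (\<lambda>S. c * phi S) = (\<lambda>S. c * QQ \<theta> k phi S)"
  by (induction k arbitrary: phi) (simp_all add: maj_scale)

lemma QQ_eig: "(\<forall>j\<in>{1..k}. maj \<theta> (2*j) (maj \<theta> (2*j+1) psi) = (\<lambda>S. c j * psi S))
   \<Longrightarrow> QQ \<theta> k psi = (\<lambda>S. (\<Prod>j\<in>{1..k}. c j) * psi S)"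
proof (induction k)
  case 0 then show ?case by simp
next
  case (Suc k)
  have "maj \<theta> (2*k+2) (maj \<theta> (2*k+3) psi) = (\<lambda>S. c (Suc k) * psi S)"
    using Suc.prems[rule_format, of "Suc k"] by (simp add: numeral_eq_Suc)
  then have "QQ \<theta> (Suc k) psi = QQ \<theta> k (\<lambda>S. c (Suc k) * psi S)" by simp
  also have "\<dots> = (\<lambda>S. c (Suc k) * QQ \<theta> k psi S)" by (rule QQ_scale)
  also have "\<dots> = (\<lambda>S. c (Suc k) * ((\<Prod>j\<in>{1..k}. c j) * psi S))" using Suc by simp
  finally show ?case by (simp add: mult_ac)
qed

lemma RR_val: "RR \<theta> k phi S = (\<Prod>j\<in>{1..k}. if j \<in> S then -\<i> else \<i>) * phi S"
proof (induction k arbitrary: phi)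
  case 0 then show ?case by simp
next
  case (Suc k)
  have e: "(2*k+1+1) div 2 = Suc k" "(2*k+2+1) div 2 = Suc k" by presburger+
  have ex: "exp (- \<i> * of_real (\<theta>/2)) * exp (\<i> * of_real (\<theta>/2)) = 1" by (rule expprod)
  have "maj \<theta> (2*k+1) (maj \<theta> (2*k+2) phi) S = (if Suc k \<in> S then -\<i> else \<i>) * phi S"
    unfolding maj_gop e gop_gop_same using ex by (auto simp: alp_def bet_def algebra_simps)
  then show ?case using Suc by (simp add: mult_ac)
qed

lemma RR_gsg: "RR \<theta> L phi S = \<i>^L * gsg L S * phi S"
proof -
  have "(\<Prod>j\<in>{1..L}. if j \<in> S then -\<i> else \<i>) = (\<Prod>j\<in>{1..L}. \<i> * (if j \<in> S then -1 else 1))"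
    by (rule prod.cong) auto
  also have "\<dots> = \<i>^L * gsg L S" by (simp add: prod.distrib gsg_def)
  finally show ?thesis by (simp add: RR_val)
qed

lemma imul: assumes "\<i> * x = y" shows "x = - \<i> * y"
proof -
  have "- \<i> * y = - (\<i> * (\<i> * x))" using assms by simp
  then show ?thesis by (simp only: complex_i_mult_minus minus_minus)
qed

lemma PL_eig:
  fixes \<theta> :: real and w :: "nat \<Rightarrow> real"
  assumes L: "L = Suc m" "m \<ge> 1"
  defines "psi \<equiv> dr \<theta> w 1 m vac"
  shows "PP \<theta> (2*L) 1 psi = (\<lambda>S. (-1)^m * (\<Prod>j\<in>{1..m}. (-1::complex) ^ sgnbit (w j)) * psi S)"
proof -
  define Sg where "Sg = (\<Prod>j\<in>{1..m}. (-1::complex) ^ sgnbit (w j))"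
  have SgSg: "Sg * Sg = 1" unfolding Sg_def prod.distrib[symmetric] by (simp add: sq_sigma)
  have eig: "\<forall>j\<in>{1..m}. maj \<theta> (2*j) (maj \<theta> (2*j+1) psi) = (\<lambda>S. (\<i> * (-1) ^ sgnbit (w j)) * psi S)"
  proof
    fix j assume j: "j \<in> {1..m}"
    have "PP \<theta> (2*j) (2*j+1) psi = (\<lambda>S. - ((-1) ^ sgnbit (w j)) * psi S)"
      unfolding psi_def by (rule dr_eig) (use j in auto)
    then have "\<And>S. \<i> * maj \<theta> (2*j) (maj \<theta> (2*j+1) psi) S = - ((-1) ^ sgnbit (w j)) * psi S"
      unfolding PP_def by meson
    then have "\<And>S. maj \<theta> (2*j) (maj \<theta> (2*j+1) psi) S = - \<i> * (- ((-1) ^ sgnbit (w j)) * psi S)"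
      using imul by blast
    then have "\<And>S. maj \<theta> (2*j) (maj \<theta> (2*j+1) psi) S = (\<i> * (-1) ^ sgnbit (w j)) * psi S"
      by simp
    then show "maj \<theta> (2*j) (maj \<theta> (2*j+1) psi) = (\<lambda>S. (\<i> * (-1) ^ sgnbit (w j)) * psi S)" by auto
  qed
  define K where "K = (\<Prod>j\<in>{1..m}. \<i> * (-1::complex) ^ sgnbit (w j))"
  have K: "K = \<i>^m * Sg" unfolding K_def Sg_def by (simp add: prod.distrib)
  have Q: "QQ \<theta> m psi = (\<lambda>S. K * psi S)" unfolding K_def by (rule QQ_eig[OF eig])
  have "RR \<theta> L psi = maj \<theta> 1 (QQ \<theta> m (maj \<theta> (2*m+2) psi))" using L RR_QQ by simp
  also have "\<dots> = maj \<theta> 1 (maj \<theta> (2*m+2) (QQ \<theta> m psi))" by (subst QQ_comm) auto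
  also have "\<dots> = (\<lambda>S. K * maj \<theta> 1 (maj \<theta> (2*m+2) psi) S)" by (simp add: Q maj_scale)
  finally have R1: "\<And>S. RR \<theta> L psi S = K * maj \<theta> 1 (maj \<theta> (2*m+2) psi) S" by simp
  have par: "gam L psi = (\<lambda>S. (-1)^m * psi S)" unfolding psi_def by (rule dr_parity) (use L in auto)
  have R2: "RR \<theta> L psi S = \<i>^L * (-1)^m * psi S" for S
    using RR_gsg[of \<theta> L psi S] fun_cong[OF par, of S] unfolding gam_def by simp
  show ?thesis
  proof
    fix S
    have A: "K * maj \<theta> 1 (maj \<theta> (2*m+2) psi) S = \<i>^L * (-1)^m * psi S" using R1 R2 by simp
    have B: "(-\<i>)^m * Sg * K = 1" unfolding K using SgSg
      by (simp add: mult_ac power_mult_distrib[symmetric])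
    have C: "maj \<theta> 1 (maj \<theta> (2*m+2) psi) S = (-\<i>)^m * Sg * (\<i>^L * (-1)^m * psi S)"
      using arg_cong[OF A, of "\<lambda>z. (-\<i>)^m * Sg * z"] B by (simp add: mult.assoc[symmetric])
    have "PP \<theta> (2*L) 1 psi S = - \<i> * maj \<theta> 1 (maj \<theta> (2*m+2) psi) S"
      unfolding PP_def using maj_anti[of "2*L" 1 \<theta> psi S] L by simp
    also have "\<dots> = ((-\<i>) * (-\<i>)^m * \<i>^L) * (-1)^m * Sg * psi S" using C by (simp add: mult_ac)
    also have "(-\<i>) * (-\<i>)^m * \<i>^L = 1"
    proof -
      have p: "(-\<i>)^m * \<i>^m = 1" by (simp add: power_mult_distrib[symmetric])
      have "(-\<i>) * (-\<i>)^m * \<i>^L = ((-\<i>) * \<i>) * ((-\<i>)^m * \<i>^m)" using L by (simp add: mult_ac)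
      then show ?thesis using p by simp
    qed
    finally have "PP \<theta> (2*L) 1 psi S = (-1)^m * Sg * psi S" by simp
    then show "PP \<theta> (2*L) 1 psi S = (-1)^m * (\<Prod>j\<in>{1..m}. (-1::complex) ^ sgnbit (w j)) * psi S"
      unfolding Sg_def .
  qed
qed

lemma wsig: "of_real x * (- ((-1::complex) ^ sgnbit x)) = - of_real \<bar>x\<bar>"
  unfolding sgnbit_def by auto

lemma ham_PP: "ham L \<theta> w psi S = (\<Sum>j=1..L-1. of_real (w j) * PP \<theta> (2*j) (2*j+1) psi S)
    + of_real (w L) * PP \<theta> (2*L) 1 psi S"
  unfolding ham_def PP_def by (simp add: mult.assoc)

lemma ham_eig:
  assumes L: "L \<ge> 1"
    and e1: "\<forall>j\<in>{1..L-1}. PP \<theta> (2*j) (2*j+1) psi = (\<lambda>S. - ((-1::complex) ^ sgnbit (w j)) * psi S)"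
    and e2: "PP \<theta> (2*L) 1 psi = (\<lambda>S. - ((-1::complex) ^ sgnbit (w L)) * psi S)"
  shows "ham L \<theta> w psi = (\<lambda>S. of_real (- (\<Sum>j=1..L. \<bar>w j\<bar>)) * psi S)"
proof
  fix S
  have "ham L \<theta> w psi S = (\<Sum>j=1..L-1. - of_real \<bar>w j\<bar> * psi S) - of_real \<bar>w L\<bar> * psi S"
    unfolding ham_PP
  proof -
    have "(\<Sum>j=1..L-1. of_real (w j) * PP \<theta> (2*j) (2*j+1) psi S) = (\<Sum>j=1..L-1. - of_real \<bar>w j\<bar> * psi S)"
    proof (rule sum.cong)
      fix j assume "j \<in> {1..L-1}"
      then have "PP \<theta> (2*j) (2*j+1) psi S = - ((-1::complex) ^ sgnbit (w j)) * psi S" using e1 by simp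
      then show "of_real (w j) * PP \<theta> (2*j) (2*j+1) psi S = - of_real \<bar>w j\<bar> * psi S"
        using wsig[of "w j"] by (simp add: mult.assoc[symmetric])
    qed simp
    moreover have "of_real (w L) * PP \<theta> (2*L) 1 psi S = - of_real \<bar>w L\<bar> * psi S"
      using e2 wsig[of "w L"] by (simp add: mult.assoc[symmetric])
    ultimately show "(\<Sum>j=1..L-1. of_real (w j) * PP \<theta> (2*j) (2*j+1) psi S) + of_real (w L) * PP \<theta> (2*L) 1 psi S
       = (\<Sum>j=1..L-1. - of_real \<bar>w j\<bar> * psi S) - of_real \<bar>w L\<bar> * psi S" by simp
  qed
  also have "\<dots> = of_real (- ((\<Sum>j=1..L-1. \<bar>w j\<bar>) + \<bar>w L\<bar>)) * psi S"
  proof -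
    have h: "(\<Sum>j=1..L-1. - of_real \<bar>w j\<bar> * psi S) = - ((\<Sum>j=1..L-1. of_real \<bar>w j\<bar>) * psi S)"
      by (simp only: sum_distrib_right sum_negf mult_minus_left)
    show ?thesis unfolding h by (simp add: algebra_simps)
  qed
  also have "(\<Sum>j=1..L-1. \<bar>w j\<bar>) + \<bar>w L\<bar> = (\<Sum>j=1..L. \<bar>w j\<bar>)"
  proof -
    have "{1..L} = insert L {1..L-1}" using L by auto
    moreover have "L \<notin> {1..L-1}" using L by auto
    ultimately show ?thesis by (simp add: add.commute)
  qed
  finally show "ham L \<theta> w psi S = of_real (- (\<Sum>j=1..L. \<bar>w j\<bar>)) * psi S" .
qed

definition NN :: "nat \<Rightarrow> fstate \<Rightarrow> real" where
  "NN L phi = (\<Sum>S\<in>Pow {1..L}. (cmod (phi S))^2)"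

definition IP :: "nat \<Rightarrow> fstate \<Rightarrow> fstate \<Rightarrow> complex" where
  "IP L phi chi = (\<Sum>S\<in>Pow {1..L}. cnj (phi S) * chi S)"

lemma tog_tog[simp]: "tog j (tog j S) = S"
  unfolding tog_def by auto

lemma tog_pow: "j \<in> {1..L} \<Longrightarrow> S \<in> Pow {1..L} \<Longrightarrow> tog j S \<in> Pow {1..L}"
  unfolding tog_def by auto

lemma cmod_jw[simp]: "cmod (jw_sign S j) = 1"
  unfolding jw_sign_def by (simp add: norm_power)

lemma gop_norm: assumes "j \<in> {1..L}" "cmod a = 1" "cmod b = 1"
  shows "NN L (gop j a b phi) = NN L phi"
proof -
  have c: "cmod (gop j a b phi S) = cmod (phi (tog j S))" for S
    unfolding gop_def tog_def using assms by (auto simp: norm_mult)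
  have "NN L (gop j a b phi) = (\<Sum>S\<in>Pow {1..L}. (cmod (phi (tog j S)))^2)"
    unfolding NN_def c ..
  also have "\<dots> = NN L phi" unfolding NN_def
    by (rule sum.reindex_bij_witness[of _ "tog j" "tog j"]) (use assms(1) in \<open>auto simp: tog_def\<close>)
  finally show ?thesis .
qed

lemma maj_norm: "(n+1) div 2 \<in> {1..L} \<Longrightarrow> NN L (maj \<theta> n phi) = NN L phi"
  unfolding maj_gop by (rule gop_norm) auto

lemma NN_scale: "NN L (\<lambda>S. c * phi S) = (cmod c)^2 * NN L phi"
  unfolding NN_def by (simp add: norm_mult power_mult_distrib sum_distrib_left)

lemma PP_norm: "(m+1) div 2 \<in> {1..L} \<Longrightarrow> (n+1) div 2 \<in> {1..L} \<Longrightarrow> NN L (PP \<theta> m n phi) = NN L phi"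
  unfolding PP_def NN_scale by (simp add: maj_norm)

lemma IP_bound: "\<bar>Re (IP L phi chi)\<bar> \<le> (NN L phi + NN L chi) / 2"
proof -
  have t: "\<bar>Re (cnj (phi S) * chi S)\<bar> \<le> ((cmod (phi S))^2 + (cmod (chi S))^2) / 2" for S
  proof -
    have "\<bar>Re (cnj (phi S) * chi S)\<bar> \<le> cmod (cnj (phi S) * chi S)" by (rule abs_Re_le_cmod)
    also have "\<dots> = cmod (phi S) * cmod (chi S)" by (simp add: norm_mult)
    also have "\<dots> \<le> ((cmod (phi S))^2 + (cmod (chi S))^2) / 2"
      using sum_squares_ge_zero[of "cmod (phi S) - cmod (chi S)" 0]
      by (simp add: power2_eq_square algebra_simps)
    finally show ?thesis .
  qed
  have "\<bar>Re (IP L phi chi)\<bar> = \<bar>\<Sum>S\<in>Pow {1..L}. Re (cnj (phi S) * chi S)\<bar>" unfolding IP_def by simp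
  also have "\<dots> \<le> (\<Sum>S\<in>Pow {1..L}. \<bar>Re (cnj (phi S) * chi S)\<bar>)" by (rule sum_abs)
  also have "\<dots> \<le> (\<Sum>S\<in>Pow {1..L}. ((cmod (phi S))^2 + (cmod (chi S))^2) / 2)" by (rule sum_mono) (rule t)
  also have "\<dots> = (NN L phi + NN L chi) / 2" by (simp only: NN_def sum.distrib[symmetric] sum_divide_distrib)
  finally show ?thesis .
qed

lemma IP_PP: assumes "(m+1) div 2 \<in> {1..L}" "(n+1) div 2 \<in> {1..L}"
  shows "x * Re (IP L phi (PP \<theta> m n phi)) \<ge> - \<bar>x\<bar> * NN L phi"
proof -
  have b: "\<bar>Re (IP L phi (PP \<theta> m n phi))\<bar> \<le> NN L phi" using IP_bound[of L phi "PP \<theta> m n phi"] PP_norm[OF assms] by simp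
  have "\<bar>x * Re (IP L phi (PP \<theta> m n phi))\<bar> \<le> \<bar>x\<bar> * NN L phi"
    unfolding abs_mult by (rule mult_left_mono[OF b]) simp
  then show ?thesis by linarith
qed

lemma IP_ham: "IP L phi (ham L \<theta> w phi) = (\<Sum>j=1..L-1. of_real (w j) * IP L phi (PP \<theta> (2*j) (2*j+1) phi))
   + of_real (w L) * IP L phi (PP \<theta> (2*L) 1 phi)"
  unfolding IP_def ham_PP
  apply (simp add: ring_distribs sum.distrib sum_distrib_left)
  apply (subst sum.swap)
  apply (simp add: mult_ac)
  done

lemma cnj_sq: "cnj z * z = (of_real (cmod z))^2"
  by (metis complex_norm_square mult.commute of_real_power)

lemma IP_eig: "IP L phi (\<lambda>S. \<mu> * phi S) = \<mu> * of_real (NN L phi)"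
proof -
  have "IP L phi (\<lambda>S. \<mu> * phi S) = (\<Sum>S\<in>Pow {1..L}. \<mu> * (of_real (cmod (phi S)))^2)"
    unfolding IP_def by (intro sum.cong refl) (metis cnj_sq mult.left_commute)
  then show ?thesis unfolding NN_def by (simp add: sum_distrib_left)
qed

lemma NN_pos: assumes "phi \<in> fock L" "phi \<noteq> (\<lambda>_. 0)" shows "NN L phi > 0"
proof -
  obtain S where S: "phi S \<noteq> 0" using assms(2) by auto
  then have "S \<in> Pow {1..L}" using assms(1) unfolding fock_def by auto
  then have "(cmod (phi S))^2 \<le> NN L phi" unfolding NN_def
    by (intro member_le_sum) auto
  moreover have "(cmod (phi S))^2 > 0" using S by simp
  ultimately show ?thesis by linarith
qed

lemma ham_lower:
  assumes L: "L \<ge> 1" and phi: "phi \<in> fock L" "phi \<noteq> (\<lambda>_. 0)"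
    and eq: "ham L \<theta> w phi = (\<lambda>S. \<mu> * phi S)"
  shows "- (\<Sum>j=1..L. \<bar>w j\<bar>) \<le> Re \<mu>"
proof -
  define N where "N = NN L phi"
  have Npos: "N > 0" unfolding N_def by (rule NN_pos[OF phi])
  have "Re \<mu> * N = Re (IP L phi (ham L \<theta> w phi))" unfolding eq IP_eig N_def by simp
  also have "\<dots> = (\<Sum>j=1..L-1. w j * Re (IP L phi (PP \<theta> (2*j) (2*j+1) phi)))
     + w L * Re (IP L phi (PP \<theta> (2*L) 1 phi))" unfolding IP_ham by (simp add: Re_sum)
  also have "\<dots> \<ge> (\<Sum>j=1..L-1. - \<bar>w j\<bar> * N) + - \<bar>w L\<bar> * N"
  proof (rule add_mono)
    show "(\<Sum>j=1..L-1. - \<bar>w j\<bar> * N) \<le> (\<Sum>j=1..L-1. w j * Re (IP L phi (PP \<theta> (2*j) (2*j+1) phi)))"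
    proof (rule sum_mono)
      fix j assume j: "j \<in> {1..L-1}"
      have e: "(2*j+1) div 2 = j" "(2*j+1+1) div 2 = j+1" by presburger+
      show "- \<bar>w j\<bar> * N \<le> w j * Re (IP L phi (PP \<theta> (2*j) (2*j+1) phi))"
        unfolding N_def by (rule IP_PP) (use j e in auto)
    qed
    show "- \<bar>w L\<bar> * N \<le> w L * Re (IP L phi (PP \<theta> (2*L) 1 phi))"
    proof -
      have e: "(2*L+1) div 2 = L" by presburger
      show ?thesis unfolding N_def by (rule IP_PP) (use L e in auto)
    qed
  qed
  also have "(\<Sum>j=1..L-1. - \<bar>w j\<bar> * N) + - \<bar>w L\<bar> * N = - (\<Sum>j=1..L. \<bar>w j\<bar>) * N"
  proof -
    have "{1..L} = insert L {1..L-1}" using L by auto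
    moreover have "L \<notin> {1..L-1}" using L by auto
    ultimately show ?thesis by (simp add: sum_distrib_right sum_distrib_left sum_negf algebra_simps)
  qed
  finally have h: "- (\<Sum>j=1..L. \<bar>w j\<bar>) * N \<le> Re \<mu> * N" .
  show ?thesis using mult_le_cancel_right_pos[OF Npos] h by blast
qed

lemma gs_intro:
  assumes L: "L \<ge> 1" and chi: "chi \<in> fock L" "chi \<noteq> (\<lambda>_. 0)"
    and e1: "\<forall>j\<in>{1..L-1}. PP \<theta> (2*j) (2*j+1) chi = (\<lambda>S. - ((-1::complex) ^ sgnbit (w j)) * chi S)"
    and e2: "PP \<theta> (2*L) 1 chi = (\<lambda>S. - ((-1::complex) ^ sgnbit (w L)) * chi S)"
  shows "ground_state L (ham L \<theta> w) chi"
  unfolding ground_state_def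
proof (intro conjI chi exI[of _ "- (\<Sum>j=1..L. \<bar>w j\<bar>)"])
  show "ham L \<theta> w chi = (\<lambda>S. complex_of_real (- (\<Sum>j = 1..L. \<bar>w j\<bar>)) * chi S)"
    by (rule ham_eig[OF L e1 e2])
  show "\<forall>phi\<in>fock L. \<forall>\<mu>. phi \<noteq> (\<lambda>_. 0) \<and> ham L \<theta> w phi = (\<lambda>S. \<mu> * phi S) \<longrightarrow>
       - (\<Sum>j = 1..L. \<bar>w j\<bar>) \<le> Re \<mu>"
    using ham_lower[OF L] by blast
qed

lemma neg1_par: "even a = even b \<Longrightarrow> (-1::complex)^a = (-1)^b"
  by (metis neg_one_even_power neg_one_odd_power)

lemma maj_zero: "maj \<theta> n (\<lambda>_. 0) = (\<lambda>_. 0)"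
  using maj_scale[of \<theta> n 0 "\<lambda>_. 0"] by simp

theorem proposition3p9:
  fixes L :: nat and \<theta> :: real and w :: "nat \<Rightarrow> real"
  assumes "L \<ge> 2"
    and "\<forall>j\<in>{1..L}. w j \<noteq> 0"
  shows "(even L = even (sP L w) \<longrightarrow>
            ground_state L (ham L \<theta> w) (dprod \<theta> w (L - 1) vac))
       \<and> (even L \<noteq> even (sP L w) \<longrightarrow>
            ground_state L (ham L \<theta> w) (dbd L \<theta> w (dprod \<theta> w (L - 1) vac)))"
proof -
  define m where "m = L - 1"
  have L: "L = Suc m" "m \<ge> 1" using assms(1) unfolding m_def by auto
  define psi where "psi = dr \<theta> w 1 m vac"
  have psi_eq: "dprod \<theta> w (L - 1) vac = psi" unfolding psi_def m_def dprod_dr ..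
  define sg where "sg = (\<lambda>j. (-1::complex) ^ sgnbit (w j))"
  have sgsg: "sg j * sg j = 1" for j unfolding sg_def by (rule sq_sigma)
  have fock: "psi \<in> fock L"
    using dr_support[of 1 m \<theta> w] L unfolding fock_def psi_def by simp
  have nz: "psi \<noteq> (\<lambda>_. 0)"
    using dr_coeff[of 1 \<theta> w m] unfolding psi_def by auto
  have e1: "\<forall>j\<in>{1..L-1}. PP \<theta> (2*j) (2*j+1) psi = (\<lambda>S. - sg j * psi S)"
  proof
    fix j assume j: "j \<in> {1..L-1}"
    show "PP \<theta> (2*j) (2*j+1) psi = (\<lambda>S. - sg j * psi S)"
      unfolding psi_def sg_def by (rule dr_eig) (use j L in auto)
  qed
  define Sp where "Sp = (\<Sum>j\<in>{1..m}. sgnbit (w j))"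
  have sP: "sP L w = Sp + sgnbit (w L)"
  proof -
    have "{1..L} = insert L {1..m}" using L by auto
    moreover have "L \<notin> {1..m}" using L by auto
    ultimately show ?thesis unfolding sP_def Sp_def by simp
  qed
  have PL: "PP \<theta> (2*L) 1 psi = (\<lambda>S. (-1)^(m + Sp) * psi S)"
    using PL_eig[OF L] unfolding psi_def Sp_def by (simp add: power_add power_sum)
  have part1: "even L = even (sP L w) \<longrightarrow> ground_state L (ham L \<theta> w) psi"
  proof
    assume par: "even L = even (sP L w)"
    have "(-1::complex)^(m + Sp) = (-1)^(Suc (sgnbit (w L)))"
      by (rule neg1_par) (use par sP L in auto)
    then have e2: "PP \<theta> (2*L) 1 psi = (\<lambda>S. - sg L * psi S)" unfolding PL sg_def by simp
    show "ground_state L (ham L \<theta> w) psi"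
      by (rule gs_intro) (use L fock nz e1 e2 in \<open>auto simp: sg_def\<close>)
  qed
  have part2: "even L \<noteq> even (sP L w) \<longrightarrow> ground_state L (ham L \<theta> w) (dbd L \<theta> w psi)"
  proof
    assume par: "even L \<noteq> even (sP L w)"
    have "(-1::complex)^(m + Sp) = (-1)^(sgnbit (w L))"
      by (rule neg1_par) (use par sP L in auto)
    then have PL2: "PP \<theta> (2*L) 1 psi = (\<lambda>S. sg L * psi S)" unfolding PL sg_def by simp
    define chi where "chi = dbd L \<theta> w psi"
    have chi_DD: "chi = DD \<theta> (sg L) (2*L) 1 psi" unfolding chi_def dbd_DD sg_def ..
    have eL: "(2*L+1) div 2 = L" by presburger
    have fsup: "\<forall>T. \<not> T \<subseteq> {1..L} \<longrightarrow> psi T = 0" using fock unfolding fock_def by blast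
    have fockc: "chi \<in> fock L"
      unfolding fock_def
    proof (intro CollectI allI impI)
      fix S assume S: "\<not> S \<subseteq> {1..L}"
      have "maj \<theta> (2*L) psi S = 0" by (rule maj_support[OF fsup]) (use S eL L in auto)
      moreover have "maj \<theta> 1 psi S = 0"
      proof (rule maj_support[OF fsup])
        have "insert ((1+1) div 2) {1..L} = {1..L}" using L by auto
        then show "\<not> S \<subseteq> insert ((1+1) div 2) {1..L}" using S by simp
      qed
      ultimately show "chi S = 0" unfolding chi_DD DD_def by simp
    qed
    have "maj \<theta> (2*L) (PP \<theta> (2*L) 1 psi) = maj \<theta> (2*L) (\<lambda>S. sg L * psi S)" unfolding PL2 ..
    then have "(\<lambda>S. \<i> * maj \<theta> 1 psi S) = (\<lambda>S. sg L * maj \<theta> (2*L) psi S)"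
      unfolding PP_def maj_scale maj_maj_self .
    then have h: "\<i> * maj \<theta> 1 psi S = sg L * maj \<theta> (2*L) psi S" for S by meson
    have chi_eq: "chi = maj \<theta> (2*L) psi"
    proof
      fix S
      have "sg L * \<i> * maj \<theta> 1 psi S = maj \<theta> (2*L) psi S"
        using h[of S] sgsg[of L] by (metis mult.assoc mult_1)
      then show "chi S = maj \<theta> (2*L) psi S" unfolding chi_DD DD_def by simp
    qed
    have nzc: "chi \<noteq> (\<lambda>_. 0)"
    proof
      assume "chi = (\<lambda>_. 0)"
      then have "maj \<theta> (2*L) (maj \<theta> (2*L) psi) = (\<lambda>_. 0)" unfolding chi_eq[symmetric] by (simp add: maj_zero)
      then show False using nz by (simp add: maj_maj_self)
    qed
    have e1c: "\<forall>j\<in>{1..L-1}. PP \<theta> (2*j) (2*j+1) chi = (\<lambda>S. - sg j * chi S)"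
    proof
      fix j assume j: "j \<in> {1..L-1}"
      have "PP \<theta> (2*j) (2*j+1) chi = DD \<theta> (sg L) (2*L) 1 (PP \<theta> (2*j) (2*j+1) psi)"
        unfolding chi_DD by (rule PC) (use j L in auto)
      also have "\<dots> = (\<lambda>S. - sg j * chi S)" using e1 j unfolding chi_DD by (simp add: DD_nscale)
      finally show "PP \<theta> (2*j) (2*j+1) chi = (\<lambda>S. - sg j * chi S)" .
    qed
    have e2c: "PP \<theta> (2*L) 1 chi = (\<lambda>S. - sg L * chi S)"
      unfolding chi_DD by (rule PD) (use L sgsg in auto)
    show "ground_state L (ham L \<theta> w) (dbd L \<theta> w psi)"
      unfolding chi_def[symmetric]
      by (rule gs_intro) (use L fockc nzc e1c e2c in \<open>auto simp: sg_def\<close>)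
  qed
  show ?thesis using part1 part2 unfolding psi_eq by blast
qed

end
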